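(* Assume $C_L<C_R$ and consider a wave sequence $U_L\xrightarrow{S_1}U_1\xrightarrow{C}U_2\xrightarrow{S_2}U_R$ with $U_L\ne U_R$, consisting of an admissible $S$-wave, an admissible $C$-wave and an admissible $S$-wave. This sequence is compatible if and only if $U_L\in\mathcal{R}$, $U_1\in\mathcal{T}$, $U_2\in\mathcal{L}$ and $0\le S_R\le S^k(U_2)$.
   Context: System: $\partial_t S+\partial_x f(S,C)=0$, $\partial_t[(S+\mathcal{A})C]+\partial_x[f(S,C)C]=0$, with $\mathcal{A}>0$ constant and states $U=(S,C)\in[0,1]^2$. The flux $f$ satisfies: (a) $f\in\mathscr{C}^2$, $f(0,C)=0$, $f(1,C)=1$, $\partial_Sf(0,C)=\partial_Sf(1,C)=0$; (b) for each $C$, $f(\cdot,C)$ is strictly increasing and S-shaped with a single inflection point (convex then concave); (c) $\partial_Cf>0$ for $0<S<1$. Eigenvalues: $\lambda_C(S,C)=f(S,C)/(S+\mathcal{A})$, $\lambda_S(S,C)=\partial_Sf(S,C)$. Transition curve $\mathcal{T}=\{\lambda_S=\lambda_C\}$, $\mathcal{L}=\{\lambda_S>\lambda_C\}$, $\mathcal{R}=\{\lambda_S<\lambda_C\}$; for each $C$, $\mathcal{T}$ contains exactly one point $(S^*(C),C)$ with $S^*(C)\in(0,1)$. For a state $U=(S,C)$, $S^k(U)$ denotes the value $S'\in[0,1]$, $S'\ne S$, with $\lambda_C(S',C)=\lambda_C(U)$; $S^k(U)=+\infty$ if no such $S'$ exists, and $S^k(U)=S^*(C)$ if $S=S^*(C)$.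 An $S$-wave from $U_a$ to $U_b$ requires $C_a=C_b=C$ and is the solution of the scalar Riemann problem $\partial_tS+\partial_xf(S,C)=0$ with left state $S_a$, right state $S_b$, built from shocks satisfying Oleinik's entropy condition and rarefactions; its initial velocity $v_i$ and final velocity $v_f$ are the smallest and largest propagation speeds in that fan. A $C$-wave from $U_a$ to $U_b$ is a contact discontinuity with $\lambda_C(U_a)=\lambda_C(U_b)$, speed $v_i=v_f=\lambda_C(U_a)$; it is admissible iff $U_a,U_b$ both lie in $\mathcal{L}\cup\mathcal{T}$ or both in $\mathcal{R}\cup\mathcal{T}$. A wave sequence is compatible iff for each pair of consecutive waves $a$ then $b$, $v_f^a\le v_i^b$. *)

theory Defs
  imports "HOL-Analysis.Analysis"
begin

definition C2_on :: "(real \<times> real) set \<Rightarrow> (real \<times> real \<Rightarrow> real) \<Rightarrow> bool" where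
  "C2_on U g \<longleftrightarrow> open U \<and>
     (\<exists>(g' :: real \<times> real \<Rightarrow> (real \<times> real) \<Rightarrow>\<^sub>L real)
        (g'' :: real \<times> real \<Rightarrow> (real \<times> real) \<Rightarrow>\<^sub>L ((real \<times> real) \<Rightarrow>\<^sub>L real)).
        (\<forall>x\<in>U. (g has_derivative blinfun_apply (g' x)) (at x)) \<and>
        (\<forall>x\<in>U. (g' has_derivative blinfun_apply (g'' x)) (at x)) \<and>
        continuous_on U g'')"

definition strict_convex_on :: "real set \<Rightarrow> (real \<Rightarrow> real) \<Rightarrow> bool" where
  "strict_convex_on I g \<longleftrightarrow> convex I \<and>
     (\<forall>x\<in>I. \<forall>y\<in>I. x \<noteq> y \<longrightarrow> (\<forall>u. 0 < u \<and> u < 1 \<longrightarrow>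
        g (u * x + (1 - u) * y) < u * g x + (1 - u) * g y))"

definition strict_concave_on :: "real set \<Rightarrow> (real \<Rightarrow> real) \<Rightarrow> bool" where
  "strict_concave_on I g \<longleftrightarrow> strict_convex_on I (\<lambda>x. - g x)"

definition flux_ok :: "(real \<Rightarrow> real \<Rightarrow> real) \<Rightarrow> bool" where
  "flux_ok f \<longleftrightarrow>
     (\<exists>U. {0..1} \<times> {0..1} \<subseteq> U \<and> C2_on U (\<lambda>(s, c). f s c)) \<and>
     (\<forall>C\<in>{0..1}. f 0 C = 0 \<and> f 1 C = 1 \<and>
        deriv (\<lambda>s. f s C) 0 = 0 \<and> deriv (\<lambda>s. f s C) 1 = 0) \<and>
     (\<forall>C\<in>{0..1}. strict_mono_on {0..1} (\<lambda>s. f s C) \<and>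
        (\<exists>s0. 0 < s0 \<and> s0 < 1 \<and> strict_convex_on {0..s0} (\<lambda>s. f s C)
                              \<and> strict_concave_on {s0..1} (\<lambda>s. f s C))) \<and>
     (\<forall>S C. 0 < S \<and> S < 1 \<and> 0 \<le> C \<and> C \<le> 1 \<longrightarrow> deriv (\<lambda>c. f S c) C > 0)"

definition lamC :: "(real \<Rightarrow> real \<Rightarrow> real) \<Rightarrow> real \<Rightarrow> real \<Rightarrow> real \<Rightarrow> real" where
  "lamC f A S C = f S C / (S + A)"

definition lamS :: "(real \<Rightarrow> real \<Rightarrow> real) \<Rightarrow> real \<Rightarrow> real \<Rightarrow> real" where
  "lamS f S C = deriv (\<lambda>s. f s C) S"

definition inT :: "(real \<Rightarrow> real \<Rightarrow> real) \<Rightarrow> real \<Rightarrow> real \<times> real \<Rightarrow> bool" where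
  "inT f A U \<longleftrightarrow> lamS f (fst U) (snd U) = lamC f A (fst U) (snd U)"

definition inL :: "(real \<Rightarrow> real \<Rightarrow> real) \<Rightarrow> real \<Rightarrow> real \<times> real \<Rightarrow> bool" where
  "inL f A U \<longleftrightarrow> lamS f (fst U) (snd U) > lamC f A (fst U) (snd U)"

definition inR :: "(real \<Rightarrow> real \<Rightarrow> real) \<Rightarrow> real \<Rightarrow> real \<times> real \<Rightarrow> bool" where
  "inR f A U \<longleftrightarrow> lamS f (fst U) (snd U) < lamC f A (fst U) (snd U)"

definition transition_ok :: "(real \<Rightarrow> real \<Rightarrow> real) \<Rightarrow> real \<Rightarrow> bool" where
  "transition_ok f A \<longleftrightarrow>
     (\<forall>C\<in>{0..1}. \<exists>!S. 0 < S \<and> S < 1 \<and> inT f A (S, C))"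

definition Sstar :: "(real \<Rightarrow> real \<Rightarrow> real) \<Rightarrow> real \<Rightarrow> real \<Rightarrow> real" where
  "Sstar f A C = (THE S. 0 < S \<and> S < 1 \<and> inT f A (S, C))"

definition Sk :: "(real \<Rightarrow> real \<Rightarrow> real) \<Rightarrow> real \<Rightarrow> real \<times> real \<Rightarrow> ereal" where
  "Sk f A U =
     (let S = fst U; C = snd U in
      if S = Sstar f A C then ereal (Sstar f A C)
      else if (\<exists>S'\<in>{0..1}. S' \<noteq> S \<and> lamC f A S' C = lamC f A S C)
      then ereal (THE S'. S' \<in> {0..1} \<and> S' \<noteq> S \<and> lamC f A S' C = lamC f A S C)
      else \<infinity>)"

text \<open>The Oleinik-entropy solution of the
scalar Riemann problem with left state a and right state b has propagation speeds
given by the derivative of the lower convex envelope on [a,b] if a < b, and of the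
upper concave envelope on [b,a] if a > b.\<close>
definition lower_env :: "(real \<Rightarrow> real) \<Rightarrow> real \<Rightarrow> real \<Rightarrow> real \<Rightarrow> real" where
  "lower_env g a b x = Sup {m * x + q | m q. \<forall>y\<in>{a..b}. m * y + q \<le> g y}"

definition upper_env :: "(real \<Rightarrow> real) \<Rightarrow> real \<Rightarrow> real \<Rightarrow> real \<Rightarrow> real" where
  "upper_env g a b x = Inf {m * x + q | m q. \<forall>y\<in>{a..b}. g y \<le> m * y + q}"

text \<open>Initial (smallest) and final (largest) speed of the S-wave from a to b
for the scalar flux g.  The trivial case a = b is never used below.\<close>
definition Swave_vi :: "(real \<Rightarrow> real) \<Rightarrow> real \<Rightarrow> real \<Rightarrow> real" where
  "Swave_vi g a b =
     (if a < b then Lim (at_right a) (\<lambda>x. (lower_env g a b x - lower_env g a b a) / (x - a))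
      else if b < a then Lim (at_left a) (\<lambda>x. (upper_env g b a a - upper_env g b a x) / (a - x))
      else deriv g a)"

definition Swave_vf :: "(real \<Rightarrow> real) \<Rightarrow> real \<Rightarrow> real \<Rightarrow> real" where
  "Swave_vf g a b =
     (if a < b then Lim (at_left b) (\<lambda>x. (lower_env g a b b - lower_env g a b x) / (b - x))
      else if b < a then Lim (at_right b) (\<lambda>x. (upper_env g b a x - upper_env g b a b) / (x - b))
      else deriv g a)"

definition adm_Cwave :: "(real \<Rightarrow> real \<Rightarrow> real) \<Rightarrow> real \<Rightarrow> real \<times> real \<Rightarrow> real \<times> real \<Rightarrow> bool" where
  "adm_Cwave f A Ua Ub \<longleftrightarrow>
     lamC f A (fst Ua) (snd Ua) = lamC f A (fst Ub) (snd Ub) \<and>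
     ((inL f A Ua \<or> inT f A Ua) \<and> (inL f A Ub \<or> inT f A Ub) \<or>
      (inR f A Ua \<or> inT f A Ua) \<and> (inR f A Ub \<or> inT f A Ub))"

text \<open>Compatibility of U_L -S-> U_1 -C-> U_2 -S-> U_R: v_f of each wave is at most
v_i of the next; the C-wave speed is lamC(U_1).\<close>
definition compatible_SCS ::
  "(real \<Rightarrow> real \<Rightarrow> real) \<Rightarrow> real \<Rightarrow> real \<times> real \<Rightarrow> real \<times> real \<Rightarrow> real \<times> real \<Rightarrow> real \<times> real \<Rightarrow> bool" where
  "compatible_SCS f A UL U1 U2 UR \<longleftrightarrow>
     Swave_vf (\<lambda>s. f s (snd UL)) (fst UL) (fst U1) \<le> lamC f A (fst U1) (snd U1) \<and>
     lamC f A (fst U1) (snd U1) \<le> Swave_vi (\<lambda>s. f s (snd U2)) (fst U2) (fst UR)"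

end

theory Submission
  imports Defs
begin


lemma env_bdd:
  assumes "x \<in> {a..b}"
  shows "bdd_above {m * x + q | m q. \<forall>y\<in>{a..b}. m * y + q \<le> (h::real\<Rightarrow>real) y}"
  using assms by (auto intro!: bdd_aboveI[where M="h x"])

lemma env_minorant:
  assumes "x \<in> {a..b}" "\<forall>y\<in>{a..b}. m * y + q \<le> h y"
  shows "m * x + q \<le> lower_env h a b x"
  unfolding lower_env_def
  by (rule cSup_upper) (use assms env_bdd[OF assms(1), of h] in auto)

lemma env_ne:
  assumes lip: "\<And>x y. x\<in>{a..b} \<Longrightarrow> y\<in>{a..b} \<Longrightarrow> \<bar>h x - h y\<bar> \<le> M * \<bar>x - y\<bar>"
    and "a \<le> b"
  shows "{m * x + q | m q. \<forall>y\<in>{a..b}. m * y + q \<le> (h::real\<Rightarrow>real) y} \<noteq> {}"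
proof -
  have "\<forall>y\<in>{a..b}. (-M) * y + (h a + M * a) \<le> h y"
  proof
    fix y assume y: "y \<in> {a..b}"
    have "\<bar>h a - h y\<bar> \<le> M * \<bar>a - y\<bar>" using lip[of a y] y assms(2) by auto
    then show "(-M) * y + (h a + M * a) \<le> h y" using y by (auto simp: abs_if algebra_simps split: if_splits)
  qed
  then show ?thesis by blast
qed

lemma env_le:
  assumes lip: "\<And>x y. x\<in>{a..b} \<Longrightarrow> y\<in>{a..b} \<Longrightarrow> \<bar>h x - h y\<bar> \<le> M * \<bar>x - y\<bar>"
    and "x \<in> {a..b}"
  shows "lower_env h a b x \<le> h x"
  unfolding lower_env_def
  by (rule cSup_least) (use env_ne[OF lip] assms(2) in auto)

lemma env_a:
  assumes lip: "\<And>x y. x\<in>{a..b} \<Longrightarrow> y\<in>{a..b} \<Longrightarrow> \<bar>h x - h y\<bar> \<le> M * \<bar>x - y\<bar>"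
    and "a \<le> b"
  shows "lower_env h a b a = h a"
proof -
  have "\<forall>y\<in>{a..b}. (-M) * y + (h a + M * a) \<le> h y"
  proof
    fix y assume y: "y \<in> {a..b}"
    have "\<bar>h a - h y\<bar> \<le> M * \<bar>a - y\<bar>" using lip[of a y] y assms(2) by auto
    then show "(-M) * y + (h a + M * a) \<le> h y" using y by (auto simp: abs_if algebra_simps split: if_splits)
  qed
  from env_minorant[OF _ this, of a] have "h a \<le> lower_env h a b a" using assms(2) by auto
  with env_le[of a b h M a, OF lip] assms(2) show ?thesis by auto
qed

lemma env_b:
  assumes lip: "\<And>x y. x\<in>{a..b} \<Longrightarrow> y\<in>{a..b} \<Longrightarrow> \<bar>h x - h y\<bar> \<le> M * \<bar>x - y\<bar>"
    and "a \<le> b"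
  shows "lower_env h a b b = h b"
proof -
  have "\<forall>y\<in>{a..b}. M * y + (h b - M * b) \<le> h y"
  proof
    fix y assume y: "y \<in> {a..b}"
    have "\<bar>h b - h y\<bar> \<le> M * \<bar>b - y\<bar>" using lip[of b y] y assms(2) by auto
    then show "M * y + (h b - M * b) \<le> h y" using y by (auto simp: abs_if algebra_simps split: if_splits)
  qed
  from env_minorant[OF _ this, of b] have "h b \<le> lower_env h a b b" using assms(2) by auto
  with env_le[of a b h M b, OF lip] assms(2) show ?thesis by auto
qed

lemma env_convex:
  assumes lip: "\<And>x y. x\<in>{a..b} \<Longrightarrow> y\<in>{a..b} \<Longrightarrow> \<bar>h x - h y\<bar> \<le> M * \<bar>x - y\<bar>"
    and x: "x \<in> {a..b}" and y: "y \<in> {a..b}" and t: "0 \<le> t" "t \<le> 1"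
  shows "lower_env h a b (t * x + (1 - t) * y) \<le> t * lower_env h a b x + (1 - t) * lower_env h a b y"
  unfolding lower_env_def[of h a b "t * x + (1 - t) * y"]
proof (rule cSup_least)
  show "{m * (t * x + (1 - t) * y) + q |m q. \<forall>y\<in>{a..b}. m * y + q \<le> h y} \<noteq> {}"
    using env_ne[OF lip] x by auto
next
  fix z assume "z \<in> {m * (t * x + (1 - t) * y) + q |m q. \<forall>y\<in>{a..b}. m * y + q \<le> h y}"
  then obtain m q where z: "z = m * (t * x + (1 - t) * y) + q" and mq: "\<forall>y\<in>{a..b}. m * y + q \<le> h y" by blast
  have 1: "m * x + q \<le> lower_env h a b x" by (rule env_minorant[OF x mq])
  have 2: "m * y + q \<le> lower_env h a b y" by (rule env_minorant[OF y mq])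
  have "z = t * (m * x + q) + (1 - t) * (m * y + q)" unfolding z by algebra
  also have "\<dots> \<le> t * lower_env h a b x + (1 - t) * lower_env h a b y"
    using 1 2 t by (intro add_mono mult_left_mono) auto
  finally show "z \<le> t * lower_env h a b x + (1 - t) * lower_env h a b y" .
qed

lemma mono_lim_right:
  fixes D :: "real \<Rightarrow> real"
  assumes "a < b" and mono: "\<And>x y. a < x \<Longrightarrow> x \<le> y \<Longrightarrow> y \<le> b \<Longrightarrow> D x \<le> D y"
    and bd: "\<And>x. x \<in> {a<..b} \<Longrightarrow> B \<le> D x"
  shows "\<exists>l. (D \<longlongrightarrow> l) (at_right a) \<and> (\<forall>x\<in>{a<..b}. l \<le> D x) \<and>
             (\<forall>c. (\<forall>x\<in>{a<..b}. c \<le> D x) \<longrightarrow> c \<le> l)"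
proof -
  define l where "l = Inf (D ` {a<..b})"
  have ne: "D ` {a<..b} \<noteq> {}" using assms(1) by auto
  have bdd: "bdd_below (D ` {a<..b})" using bd by (auto intro!: bdd_belowI[where m=B])
  have low: "\<forall>x\<in>{a<..b}. l \<le> D x" unfolding l_def using bdd by (auto intro: cInf_lower)
  have gr: "\<forall>c. (\<forall>x\<in>{a<..b}. c \<le> D x) \<longrightarrow> c \<le> l" unfolding l_def using ne by (auto intro: cInf_greatest)
  have "(D \<longlongrightarrow> l) (at_right a)"
  proof (rule order_tendstoI)
    fix e assume "e < l"
    show "eventually (\<lambda>x. e < D x) (at_right a)"
      using eventually_at_right_real[OF assms(1)] by eventually_elim (use low \<open>e < l\<close> in force)
  next
    fix e assume "l < e"
    then obtain x0 where x0: "x0 \<in> {a<..b}" "D x0 < e" unfolding l_def using cInf_lessD[OF ne] by blast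
    show "eventually (\<lambda>x. D x < e) (at_right a)"
      using eventually_at_right_real[of a x0] x0
      by (auto elim!: eventually_mono intro: le_less_trans[OF mono[of _ x0]])
  qed
  with low gr show ?thesis by blast
qed

lemma mono_lim_left:
  fixes E :: "real \<Rightarrow> real"
  assumes "a < b" and mono: "\<And>x y. a \<le> x \<Longrightarrow> x \<le> y \<Longrightarrow> y < b \<Longrightarrow> E x \<le> E y"
    and bd: "\<And>x. x \<in> {a..<b} \<Longrightarrow> E x \<le> B"
  shows "\<exists>l. (E \<longlongrightarrow> l) (at_left b) \<and> (\<forall>x\<in>{a..<b}. E x \<le> l) \<and>
             (\<forall>c. (\<forall>x\<in>{a..<b}. E x \<le> c) \<longrightarrow> l \<le> c)"
proof -
  define l where "l = Sup (E ` {a..<b})"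
  have ne: "E ` {a..<b} \<noteq> {}" using assms(1) by auto
  have bdd: "bdd_above (E ` {a..<b})" using bd by (auto intro!: bdd_aboveI[where M=B])
  have up: "\<forall>x\<in>{a..<b}. E x \<le> l" unfolding l_def using bdd by (auto intro: cSup_upper)
  have gr: "\<forall>c. (\<forall>x\<in>{a..<b}. E x \<le> c) \<longrightarrow> l \<le> c" unfolding l_def using ne by (auto intro: cSup_least)
  have "(E \<longlongrightarrow> l) (at_left b)"
  proof (rule order_tendstoI)
    fix e assume "l < e"
    show "eventually (\<lambda>x. E x < e) (at_left b)"
      using eventually_at_left_real[OF assms(1)]
    proof eventually_elim
      case (elim x) then have "E x \<le> l" using up by auto
      then show ?case using \<open>l < e\<close> by linarith
    qed
  next
    fix e assume "e < l"
    then obtain x0 where x0: "x0 \<in> {a..<b}" "e < E x0" unfolding l_def using less_cSupD[OF ne] by blast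
    show "eventually (\<lambda>x. e < E x) (at_left b)"
      using eventually_at_left_real[of x0 b] x0
      by (auto elim!: eventually_mono intro: less_le_trans[OF _ mono[of x0]])
  qed
  with up gr show ?thesis by blast
qed

lemma lip_minor_a:
  fixes h :: "real \<Rightarrow> real"
  assumes lip: "\<And>x y. x\<in>{a..b} \<Longrightarrow> y\<in>{a..b} \<Longrightarrow> \<bar>h x - h y\<bar> \<le> M * \<bar>x - y\<bar>"
    and "a \<le> b"
  shows "\<forall>y\<in>{a..b}. (-M) * y + (h a + M * a) \<le> h y"
proof
  fix y assume y: "y \<in> {a..b}"
  have "\<bar>h a - h y\<bar> \<le> M * \<bar>a - y\<bar>" using lip[of a y] y assms(2) by auto
  then show "(-M) * y + (h a + M * a) \<le> h y" using y by (auto simp: abs_if algebra_simps split: if_splits)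
qed

lemma lip_minor_b:
  fixes h :: "real \<Rightarrow> real"
  assumes lip: "\<And>x y. x\<in>{a..b} \<Longrightarrow> y\<in>{a..b} \<Longrightarrow> \<bar>h x - h y\<bar> \<le> M * \<bar>x - y\<bar>"
    and "a \<le> b"
  shows "\<forall>y\<in>{a..b}. M * y + (h b - M * b) \<le> h y"
proof
  fix y assume y: "y \<in> {a..b}"
  have "\<bar>h b - h y\<bar> \<le> M * \<bar>b - y\<bar>" using lip[of b y] y assms(2) by auto
  then show "M * y + (h b - M * b) \<le> h y" using y by (auto simp: abs_if algebra_simps split: if_splits)
qed

lemma env_right_slope:
  assumes lip: "\<And>x y. x\<in>{a..b} \<Longrightarrow> y\<in>{a..b} \<Longrightarrow> \<bar>h x - h y\<bar> \<le> M * \<bar>x - y\<bar>"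
    and ab: "a < b"
  shows "\<exists>l. ((\<lambda>x. (lower_env h a b x - lower_env h a b a) / (x - a)) \<longlongrightarrow> l) (at_right a) \<and>
     (\<forall>x\<in>{a<..b}. l \<le> (lower_env h a b x - lower_env h a b a) / (x - a)) \<and>
     (\<forall>c. (\<forall>x\<in>{a<..b}. c \<le> (lower_env h a b x - lower_env h a b a) / (x - a)) \<longrightarrow> c \<le> l)"
proof (rule mono_lim_right[OF ab])
  let ?L = "lower_env h a b"
  fix x y assume xy: "a < x" "x \<le> y" "y \<le> b"
  define t where "t = (x - a) / (y - a)"
  have t: "0 \<le> t" "t \<le> 1" using xy unfolding t_def by auto
  have "t * (y - a) = x - a" using xy unfolding t_def by simp
  then have xe: "x = t * y + (1 - t) * a" by (simp add: algebra_simps)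
  have "?L x \<le> t * ?L y + (1 - t) * ?L a"
    using env_convex[OF lip, where x=y and y=a and t=t] xy t ab xe by auto
  then have "?L x - ?L a \<le> t * (?L y - ?L a)" by (simp add: algebra_simps)
  then have "(?L x - ?L a) / (x - a) \<le> t * (?L y - ?L a) / (x - a)" using xy by (simp add: divide_right_mono)
  also have "\<dots> = (?L y - ?L a) / (y - a)"
  proof -
    have "x - a \<noteq> 0" "y - a \<noteq> 0" using xy by auto
    then have "t / (x - a) = 1 / (y - a)" unfolding t_def by simp
    then have "t * (?L y - ?L a) / (x - a) = (?L y - ?L a) * (1 / (y - a))"
      by (metis times_divide_eq_right mult.commute)
    then show ?thesis by simp
  qed
  finally show "(?L x - ?L a) / (x - a) \<le> (?L y - ?L a) / (y - a)" .
next
  let ?L = "lower_env h a b"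
  fix x assume x: "x \<in> {a<..b}"
  have "(-M) * x + (h a + M * a) \<le> ?L x" using env_minorant[OF _ lip_minor_a[OF lip]] x ab by auto
  moreover have "?L a = h a" using env_a[OF lip] ab by auto
  ultimately have "- M * (x - a) \<le> ?L x - ?L a" by (simp add: algebra_simps)
  then show "- M \<le> (?L x - ?L a) / (x - a)" using x by (simp add: field_simps)
qed

lemma env_left_slope:
  assumes lip: "\<And>x y. x\<in>{a..b} \<Longrightarrow> y\<in>{a..b} \<Longrightarrow> \<bar>h x - h y\<bar> \<le> M * \<bar>x - y\<bar>"
    and ab: "a < b"
  shows "\<exists>l. ((\<lambda>x. (lower_env h a b b - lower_env h a b x) / (b - x)) \<longlongrightarrow> l) (at_left b) \<and>
     (\<forall>x\<in>{a..<b}. (lower_env h a b b - lower_env h a b x) / (b - x) \<le> l) \<and>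
     (\<forall>c. (\<forall>x\<in>{a..<b}. (lower_env h a b b - lower_env h a b x) / (b - x) \<le> c) \<longrightarrow> l \<le> c)"
proof (rule mono_lim_left[OF ab])
  let ?L = "lower_env h a b"
  fix x y assume xy: "a \<le> x" "x \<le> y" "y < b"
  define t where "t = (b - y) / (b - x)"
  have t: "0 \<le> t" "t \<le> 1" using xy unfolding t_def by auto
  have "t * (b - x) = b - y" using xy unfolding t_def by simp
  then have ye: "y = t * x + (1 - t) * b" by (simp add: algebra_simps)
  have "?L y \<le> t * ?L x + (1 - t) * ?L b"
    using env_convex[OF lip, where x=x and y=b and t=t] xy t ab ye by auto
  then have "t * (?L b - ?L x) \<le> ?L b - ?L y" by (simp add: algebra_simps)
  then have "t * (?L b - ?L x) / (b - y) \<le> (?L b - ?L y) / (b - y)" using xy by (simp add: divide_right_mono)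
  moreover have "t * (?L b - ?L x) / (b - y) = (?L b - ?L x) / (b - x)"
  proof -
    have "b - x \<noteq> 0" "b - y \<noteq> 0" using xy by auto
    then have "t / (b - y) = 1 / (b - x)" unfolding t_def by simp
    then have "t * (?L b - ?L x) / (b - y) = (?L b - ?L x) * (1 / (b - x))"
      by (metis times_divide_eq_right mult.commute)
    then show ?thesis by simp
  qed
  ultimately show "(?L b - ?L x) / (b - x) \<le> (?L b - ?L y) / (b - y)" by simp
next
  let ?L = "lower_env h a b"
  fix x assume x: "x \<in> {a..<b}"
  have "M * x + (h b - M * b) \<le> ?L x" using env_minorant[OF _ lip_minor_b[OF lip]] x ab by auto
  moreover have "?L b = h b" using env_b[OF lip] ab by auto
  ultimately have "?L b - ?L x \<le> M * (b - x)" by (simp add: algebra_simps)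
  then show "(?L b - ?L x) / (b - x) \<le> M" using x by (simp add: field_simps)
qed

lemma upper_env_eq: "upper_env g a b x = - lower_env (\<lambda>y. - g y) a b x"
proof -
  have e: "{m * x + q | m q. \<forall>y\<in>{a..b}. g y \<le> m * y + q} =
        uminus ` {m * x + q | m q. \<forall>y\<in>{a..b}. m * y + q \<le> - g y}"
  proof (rule set_eqI, rule iffI)
    fix z assume "z \<in> {m * x + q | m q. \<forall>y\<in>{a..b}. g y \<le> m * y + q}"
    then obtain m q where z: "z = m * x + q" and mq: "\<forall>y\<in>{a..b}. g y \<le> m * y + q" by blast
    have h1: "\<forall>y\<in>{a..b}. (-m) * y + (-q) \<le> - g y" using mq by force
    have h2: "- z = (-m) * x + (-q)" using z by simp
    have "\<exists>m' q'. - z = m' * x + q' \<and> (\<forall>y\<in>{a..b}. m' * y + q' \<le> - g y)"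
      apply (rule exI[of _ "-m"]) apply (rule exI[of _ "-q"]) using h1 h2 by simp
    then have "- z \<in> {m * x + q | m q. \<forall>y\<in>{a..b}. m * y + q \<le> - g y}" by simp
    then show "z \<in> uminus ` {m * x + q | m q. \<forall>y\<in>{a..b}. m * y + q \<le> - g y}"
      by (rule image_eqI[of z uminus "-z", rotated]) simp
  next
    fix z assume "z \<in> uminus ` {m * x + q | m q. \<forall>y\<in>{a..b}. m * y + q \<le> - g y}"
    then obtain m q where z: "z = - (m * x + q)" and mq: "\<forall>y\<in>{a..b}. m * y + q \<le> - g y" by blast
    have h1: "\<forall>y\<in>{a..b}. g y \<le> (-m) * y + (-q)" using mq by force
    have h2: "z = (-m) * x + (-q)" using z by simp
    have "\<exists>m' q'. z = m' * x + q' \<and> (\<forall>y\<in>{a..b}. g y \<le> m' * y + q')"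
      apply (rule exI[of _ "-m"]) apply (rule exI[of _ "-q"]) using h1 h2 by simp
    then show "z \<in> {m * x + q | m q. \<forall>y\<in>{a..b}. g y \<le> m * y + q}" by simp
  qed
  have "upper_env g a b x = Inf (uminus ` {m * x + q | m q. \<forall>y\<in>{a..b}. m * y + q \<le> - g y})"
    unfolding upper_env_def e ..
  also have "\<dots> = - Sup {m * x + q | m q. \<forall>y\<in>{a..b}. m * y + q \<le> - g y}"
    unfolding Inf_real_def image_image by simp
  finally show ?thesis unfolding lower_env_def .
qed




lemma chord_left:
  assumes "(g has_real_derivative d) (at b)"
  shows "((\<lambda>x. (g b - g x) / (b - x)) \<longlongrightarrow> d) (at_left b)"
proof -
  have "((\<lambda>x. (g x - g b) / (x - b)) \<longlongrightarrow> d) (at b within {..<b})"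
    using assms has_field_derivative_iff has_field_derivative_at_within by blast
  moreover have "(\<lambda>x. (g x - g b) / (x - b)) = (\<lambda>x. (g b - g x) / (b - x))"
    by (rule ext) (metis minus_diff_eq minus_divide_divide)
  ultimately show ?thesis by simp
qed

lemma chord_right:
  assumes "(g has_real_derivative d) (at a)"
  shows "((\<lambda>x. (g x - g a) / (x - a)) \<longlongrightarrow> d) (at_right a)"
  using assms has_field_derivative_iff has_field_derivative_at_within by blast

locale lipw =
  fixes g :: "real \<Rightarrow> real" and a b M :: real
  assumes ab: "a < b"
    and lip: "\<And>x y. x\<in>{a..b} \<Longrightarrow> y\<in>{a..b} \<Longrightarrow> \<bar>g x - g y\<bar> \<le> M * \<bar>x - y\<bar>"
begin

lemma lipm: "\<And>x y. x\<in>{a..b} \<Longrightarrow> y\<in>{a..b} \<Longrightarrow> \<bar>(\<lambda>y. - g y) x - (\<lambda>y. - g y) y\<bar> \<le> M * \<bar>x - y\<bar>"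
  using lip by (simp add: abs_minus_commute)

lemma vf_inc_ge:
  assumes "(g has_real_derivative d) (at b)"
  shows "d \<le> Swave_vf g a b \<and> (g b - g a) / (b - a) \<le> Swave_vf g a b"
proof -
  let ?L = "lower_env g a b"
  obtain l where l: "((\<lambda>x. (?L b - ?L x) / (b - x)) \<longlongrightarrow> l) (at_left b)"
    "\<forall>x\<in>{a..<b}. (?L b - ?L x) / (b - x) \<le> l"
    using env_left_slope[OF lip ab] by blast
  have v: "Swave_vf g a b = l" unfolding Swave_vf_def using ab l(1) by (simp add: tendsto_Lim)
  have ch: "(g b - g x) / (b - x) \<le> l" if x: "x \<in> {a..<b}" for x
  proof -
    have "?L x \<le> g x" using env_le[OF lip] x by auto
    moreover have "?L b = g b" using env_b[OF lip] ab by auto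
    ultimately have "(g b - g x) / (b - x) \<le> (?L b - ?L x) / (b - x)" using x by (simp add: divide_right_mono)
    with l(2) x show ?thesis by force
  qed
  have "d \<le> l"
  proof (rule tendsto_le[OF _ tendsto_const chord_left[OF assms]])
    show "at_left b \<noteq> bot" by simp
    show "\<forall>\<^sub>F x in at_left b. (g b - g x) / (b - x) \<le> l"
      using eventually_at_left_real[OF ab] by eventually_elim (use ch in auto)
  qed
  with ch[of a] ab v show ?thesis by auto
qed

lemma vi_inc_le:
  assumes "(g has_real_derivative d) (at a)"
  shows "Swave_vi g a b \<le> d \<and> Swave_vi g a b \<le> (g b - g a) / (b - a)"
proof -
  let ?L = "lower_env g a b"
  obtain l where l: "((\<lambda>x. (?L x - ?L a) / (x - a)) \<longlongrightarrow> l) (at_right a)"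
    "\<forall>x\<in>{a<..b}. l \<le> (?L x - ?L a) / (x - a)"
    using env_right_slope[OF lip ab] by blast
  have v: "Swave_vi g a b = l" unfolding Swave_vi_def using ab l(1) by (simp add: tendsto_Lim)
  have ch: "l \<le> (g x - g a) / (x - a)" if x: "x \<in> {a<..b}" for x
  proof -
    have "?L x \<le> g x" using env_le[OF lip] x by auto
    moreover have "?L a = g a" using env_a[OF lip] ab by auto
    ultimately have "(?L x - ?L a) / (x - a) \<le> (g x - g a) / (x - a)" using x by (simp add: divide_right_mono)
    with l(2) x show ?thesis by force
  qed
  have "l \<le> d"
  proof (rule tendsto_le[OF _ chord_right[OF assms] tendsto_const])
    show "at_right a \<noteq> bot" by simp
    show "\<forall>\<^sub>F x in at_right a. l \<le> (g x - g a) / (x - a)"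
      using eventually_at_right_real[OF ab] by eventually_elim (use ch in auto)
  qed
  with ch[of b] ab v show ?thesis by auto
qed

lemma vi_inc_ge:
  assumes "\<forall>y\<in>{a..b}. g a + c * (y - a) \<le> g y"
  shows "c \<le> Swave_vi g a b"
proof -
  let ?L = "lower_env g a b"
  obtain l where l: "((\<lambda>x. (?L x - ?L a) / (x - a)) \<longlongrightarrow> l) (at_right a)"
    "\<forall>c. (\<forall>x\<in>{a<..b}. c \<le> (?L x - ?L a) / (x - a)) \<longrightarrow> c \<le> l"
    using env_right_slope[OF lip ab] by blast
  have v: "Swave_vi g a b = l" unfolding Swave_vi_def using ab l(1) by (simp add: tendsto_Lim)
  have "c \<le> (?L x - ?L a) / (x - a)" if x: "x \<in> {a<..b}" for x
  proof -
    have mn: "\<forall>y\<in>{a..b}. c * y + (g a - c * a) \<le> g y" using assms by (auto simp: algebra_simps)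
    have "c * x + (g a - c * a) \<le> ?L x" using env_minorant[OF _ mn] x by auto
    moreover have "?L a = g a" using env_a[OF lip] ab by auto
    ultimately have "c * (x - a) \<le> ?L x - ?L a" by (simp add: algebra_simps)
    then show ?thesis using x by (simp add: field_simps)
  qed
  with l(2) v show ?thesis by auto
qed

lemma vf_dec_eq:
  "Swave_vf g b a = Lim (at_right a) (\<lambda>x. - ((lower_env (\<lambda>y. - g y) a b x - lower_env (\<lambda>y. - g y) a b a) / (x - a)))"
proof -
  have "(\<lambda>x. (upper_env g a b x - upper_env g a b a) / (x - a)) =
    (\<lambda>x. - ((lower_env (\<lambda>y. - g y) a b x - lower_env (\<lambda>y. - g y) a b a) / (x - a)))"
    by (rule ext) (simp add: upper_env_eq divide_simps)
  then show ?thesis unfolding Swave_vf_def using ab by simp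
qed

lemma vi_dec_eq:
  "Swave_vi g b a = Lim (at_left b) (\<lambda>x. - ((lower_env (\<lambda>y. - g y) a b b - lower_env (\<lambda>y. - g y) a b x) / (b - x)))"
proof -
  have "(\<lambda>x. (upper_env g a b b - upper_env g a b x) / (b - x)) =
    (\<lambda>x. - ((lower_env (\<lambda>y. - g y) a b b - lower_env (\<lambda>y. - g y) a b x) / (b - x)))"
    by (rule ext) (simp add: upper_env_eq divide_simps)
  then show ?thesis unfolding Swave_vi_def using ab by simp
qed

lemma vf_dec_ge:
  assumes "(g has_real_derivative d) (at a)"
  shows "d \<le> Swave_vf g b a \<and> (g b - g a) / (b - a) \<le> Swave_vf g b a"
proof -
  let ?L = "lower_env (\<lambda>y. - g y) a b"
  obtain l where l: "((\<lambda>x. (?L x - ?L a) / (x - a)) \<longlongrightarrow> l) (at_right a)"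
    "\<forall>x\<in>{a<..b}. l \<le> (?L x - ?L a) / (x - a)"
    using env_right_slope[OF lipm ab] by blast
  have v: "Swave_vf g b a = - l" unfolding vf_dec_eq using l(1) by (simp add: tendsto_Lim tendsto_minus)
  have ch: "(g x - g a) / (x - a) \<le> - l" if x: "x \<in> {a<..b}" for x
  proof -
    have "?L x \<le> - g x" using env_le[OF lipm] x by auto
    moreover have "?L a = - g a" using env_a[OF lipm] ab by auto
    ultimately have "?L x - ?L a \<le> - (g x - g a)" by simp
    then have "(?L x - ?L a) / (x - a) \<le> (- (g x - g a)) / (x - a)" using x by (simp add: divide_right_mono)
    then have "(?L x - ?L a) / (x - a) \<le> - ((g x - g a) / (x - a))" by (metis minus_diff_eq minus_divide_left)
    with l(2) x show ?thesis by force
  qed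
  have "d \<le> - l"
  proof (rule tendsto_le[OF _ tendsto_const chord_right[OF assms]])
    show "at_right a \<noteq> bot" by simp
    show "\<forall>\<^sub>F x in at_right a. (g x - g a) / (x - a) \<le> - l"
      using eventually_at_right_real[OF ab] by eventually_elim (use ch in auto)
  qed
  with ch[of b] ab v show ?thesis by auto
qed

lemma vf_dec_le:
  assumes "\<forall>y\<in>{a..b}. g y \<le> g a + c * (y - a)"
  shows "Swave_vf g b a \<le> c"
proof -
  let ?L = "lower_env (\<lambda>y. - g y) a b"
  obtain l where l: "((\<lambda>x. (?L x - ?L a) / (x - a)) \<longlongrightarrow> l) (at_right a)"
    "\<forall>c. (\<forall>x\<in>{a<..b}. c \<le> (?L x - ?L a) / (x - a)) \<longrightarrow> c \<le> l"
    using env_right_slope[OF lipm ab] by blast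
  have v: "Swave_vf g b a = - l" unfolding vf_dec_eq using l(1) by (simp add: tendsto_Lim tendsto_minus)
  have "- c \<le> (?L x - ?L a) / (x - a)" if x: "x \<in> {a<..b}" for x
  proof -
    have mn: "\<forall>y\<in>{a..b}. (- c) * y + (c * a - g a) \<le> - g y" using assms by (auto simp: algebra_simps)
    have "(- c) * x + (c * a - g a) \<le> ?L x" using env_minorant[OF _ mn] x by auto
    moreover have "?L a = - g a" using env_a[OF lipm] ab by auto
    ultimately have "(- c) * (x - a) \<le> ?L x - ?L a" by (simp add: algebra_simps)
    then show ?thesis using x by (simp add: field_simps)
  qed
  with l(2) v show ?thesis by force
qed

lemma vi_dec_le:
  assumes "(g has_real_derivative d) (at b)"
  shows "Swave_vi g b a \<le> d"
proof -
  let ?L = "lower_env (\<lambda>y. - g y) a b"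
  obtain l where l: "((\<lambda>x. (?L b - ?L x) / (b - x)) \<longlongrightarrow> l) (at_left b)"
    "\<forall>x\<in>{a..<b}. (?L b - ?L x) / (b - x) \<le> l"
    using env_left_slope[OF lipm ab] by blast
  have v: "Swave_vi g b a = - l" unfolding vi_dec_eq using l(1) by (simp add: tendsto_Lim tendsto_minus)
  have ch: "- l \<le> (g b - g x) / (b - x)" if x: "x \<in> {a..<b}" for x
  proof -
    have "?L x \<le> - g x" using env_le[OF lipm] x by auto
    moreover have "?L b = - g b" using env_b[OF lipm] ab by auto
    ultimately have "- (g b - g x) \<le> ?L b - ?L x" by simp
    then have "(- (g b - g x)) / (b - x) \<le> (?L b - ?L x) / (b - x)" using x by (simp add: divide_right_mono)
    then have "- ((g b - g x) / (b - x)) \<le> (?L b - ?L x) / (b - x)" by (metis minus_diff_eq minus_divide_left)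
    with l(2) x show ?thesis by force
  qed
  have "- l \<le> d"
  proof (rule tendsto_le[OF _ chord_left[OF assms] tendsto_const])
    show "at_left b \<noteq> bot" by simp
    show "\<forall>\<^sub>F x in at_left b. - l \<le> (g b - g x) / (b - x)"
      using eventually_at_left_real[OF ab] by eventually_elim (use ch in auto)
  qed
  with v show ?thesis by auto
qed

lemma vi_dec_ge:
  assumes "\<forall>y\<in>{a..b}. g y \<le> g b + c * (y - b)"
  shows "c \<le> Swave_vi g b a"
proof -
  let ?L = "lower_env (\<lambda>y. - g y) a b"
  obtain l where l: "((\<lambda>x. (?L b - ?L x) / (b - x)) \<longlongrightarrow> l) (at_left b)"
    "\<forall>c. (\<forall>x\<in>{a..<b}. (?L b - ?L x) / (b - x) \<le> c) \<longrightarrow> l \<le> c"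
    using env_left_slope[OF lipm ab] by blast
  have v: "Swave_vi g b a = - l" unfolding vi_dec_eq using l(1) by (simp add: tendsto_Lim tendsto_minus)
  have "(?L b - ?L x) / (b - x) \<le> - c" if x: "x \<in> {a..<b}" for x
  proof -
    have mn: "\<forall>y\<in>{a..b}. (- c) * y + (c * b - g b) \<le> - g y" using assms by (auto simp: algebra_simps)
    have "(- c) * x + (c * b - g b) \<le> ?L x" using env_minorant[OF _ mn] x by auto
    moreover have "?L b = - g b" using env_b[OF lipm] ab by auto
    ultimately have "?L b - ?L x \<le> (- c) * (b - x)" by (simp add: algebra_simps)
    then show ?thesis using x by (simp add: field_simps)
  qed
  with l(2) v show ?thesis by force
qed

end



lemma flux_C1:
  assumes "flux_ok f"
  obtains U g' where "{0..1}\<times>{0..1} \<subseteq> U" "open U"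
    "\<And>x. x\<in>U \<Longrightarrow> ((\<lambda>(s,c). f s c) has_derivative blinfun_apply (g' x)) (at x)"
    "continuous_on U g'"
proof -
  from assms obtain U where U: "{0..1}\<times>{0..1} \<subseteq> U" "C2_on U (\<lambda>(s,c). f s c)"
    unfolding flux_ok_def by blast
  then obtain g' g'' where o: "open U" and d1: "\<forall>x\<in>U. ((\<lambda>(s,c). f s c) has_derivative blinfun_apply (g' x)) (at x)"
    and d2: "\<forall>x\<in>U. (g' has_derivative blinfun_apply (g'' x)) (at x)"
    unfolding C2_on_def by blast
  have "continuous_on U g'"
    by (intro continuous_at_imp_continuous_on ballI has_derivative_continuous) (use d2 in blast)
  with U o d1 that show ?thesis by blast
qed

lemma dS:
  fixes f :: "real \<Rightarrow> real \<Rightarrow> real" and G :: "(real \<times> real) \<Rightarrow>\<^sub>L real" and s C :: real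
  assumes "((\<lambda>(s,c). f s c) has_derivative blinfun_apply G) (at (s,C))"
  shows "((\<lambda>s. f s C) has_real_derivative blinfun_apply G (1,0)) (at s)"
proof -
  have p: "((\<lambda>s. (s, C)) has_derivative (\<lambda>h. (h, 0))) (at s)"
    by (auto intro!: derivative_eq_intros)
  have "((\<lambda>(s,c). f s c) \<circ> (\<lambda>s. (s,C)) has_derivative blinfun_apply G \<circ> (\<lambda>h. (h,0))) (at s)"
    using diff_chain_at[OF p assms] by simp
  then have "((\<lambda>s. f s C) has_derivative (\<lambda>h. blinfun_apply G (h,0))) (at s)" by (simp add: o_def)
  then show ?thesis
  proof (rule has_derivative_imp_has_field_derivative)
    fix x :: real
    have "(x, 0::real) = x *\<^sub>R (1::real, 0::real)" by simp
    moreover have "blinfun_apply G (x *\<^sub>R (1::real, 0::real)) = x *\<^sub>R blinfun_apply G (1, 0)"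
      by (rule blinfun.scaleR_right)
    ultimately have "blinfun_apply G (x, 0) = x *\<^sub>R blinfun_apply G (1, 0)" by simp
    then show "x * blinfun_apply G (1, 0) = blinfun_apply G (x, 0)" by simp
  qed
qed

lemma dC:
  fixes f :: "real \<Rightarrow> real \<Rightarrow> real" and G :: "(real \<times> real) \<Rightarrow>\<^sub>L real" and s C :: real
  assumes "((\<lambda>(s,c). f s c) has_derivative blinfun_apply G) (at (s,C))"
  shows "((\<lambda>c. f s c) has_real_derivative blinfun_apply G (0,1)) (at C)"
proof -
  have p: "((\<lambda>c. (s, c)) has_derivative (\<lambda>h. (0, h))) (at C)"
    by (auto intro!: derivative_eq_intros)
  have "((\<lambda>(s,c). f s c) \<circ> (\<lambda>c. (s,c)) has_derivative blinfun_apply G \<circ> (\<lambda>h. (0,h))) (at C)"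
    using diff_chain_at[OF p assms] by simp
  then have "((\<lambda>c. f s c) has_derivative (\<lambda>h. blinfun_apply G (0,h))) (at C)" by (simp add: o_def)
  then show ?thesis
  proof (rule has_derivative_imp_has_field_derivative)
    fix x :: real
    have "(0::real, x) = x *\<^sub>R (0::real, 1::real)" by simp
    moreover have "blinfun_apply G (x *\<^sub>R (0::real, 1::real)) = x *\<^sub>R blinfun_apply G (0, 1)"
      by (rule blinfun.scaleR_right)
    ultimately have "blinfun_apply G (0, x) = x *\<^sub>R blinfun_apply G (0, 1)" by simp
    then show "x * blinfun_apply G (0, 1) = blinfun_apply G (0, x)" by simp
  qed
qed

locale flux =
  fixes f :: "real \<Rightarrow> real \<Rightarrow> real" and A :: real
  assumes A: "A > 0" and fok: "flux_ok f" and tok: "transition_ok f A"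
begin

lemma gder:
  assumes "C \<in> {0..1}" "s \<in> {0..1}"
  shows "((\<lambda>s. f s C) has_real_derivative deriv (\<lambda>s. f s C) s) (at s)"
proof -
  obtain U g' where U: "{0..1}\<times>{0..1} \<subseteq> U"
    "\<And>x. x\<in>U \<Longrightarrow> ((\<lambda>(s,c). f s c) has_derivative blinfun_apply (g' x)) (at x)"
    "continuous_on U g'" and "open U"
    by (rule flux_C1[OF fok]) (auto intro: that)
  have "(s,C) \<in> U" using U(1) assms by auto
  from dS[OF U(2)[OF this]] have d: "((\<lambda>s. f s C) has_real_derivative blinfun_apply (g' (s, C)) (1,0)) (at s)" .
  show ?thesis unfolding DERIV_imp_deriv[OF d] by (rule d)
qed

lemma cder:
  assumes "C \<in> {0..1}" "s \<in> {0..1}"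
  shows "((\<lambda>c. f s c) has_real_derivative deriv (\<lambda>c. f s c) C) (at C)"
proof -
  obtain U g' where U: "{0..1}\<times>{0..1} \<subseteq> U"
    "\<And>x. x\<in>U \<Longrightarrow> ((\<lambda>(s,c). f s c) has_derivative blinfun_apply (g' x)) (at x)"
    "continuous_on U g'" and "open U"
    by (rule flux_C1[OF fok]) (auto intro: that)
  have "(s,C) \<in> U" using U(1) assms by auto
  from dC[OF U(2)[OF this]] have d: "((\<lambda>c. f s c) has_real_derivative blinfun_apply (g' (s, C)) (0,1)) (at C)" .
  show ?thesis unfolding DERIV_imp_deriv[OF d] by (rule d)
qed

lemma dcont:
  assumes "C \<in> {0..1}"
  shows "continuous_on {0..1} (\<lambda>s. deriv (\<lambda>s. f s C) s)"
proof -
  obtain U g' where U: "{0..1}\<times>{0..1} \<subseteq> U"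
    "\<And>x. x\<in>U \<Longrightarrow> ((\<lambda>(s,c). f s c) has_derivative blinfun_apply (g' x)) (at x)"
    "continuous_on U g'" and "open U"
    by (rule flux_C1[OF fok]) (auto intro: that)
  have e: "deriv (\<lambda>s. f s C) s = blinfun_apply (g' (s, C)) (1,0)" if "s \<in> {0..1}" for s
  proof -
    have "(s,C) \<in> U" using U(1) assms that by auto
    from dS[OF U(2)[OF this]] show ?thesis by (rule DERIV_imp_deriv)
  qed
  have c1: "continuous_on {0..1} (\<lambda>s. g' (s, C))"
  proof (rule continuous_on_compose2[OF U(3)])
    show "continuous_on {0..1} (\<lambda>s. (s, C))" by (intro continuous_intros)
    show "(\<lambda>s. (s, C)) ` {0..1} \<subseteq> U" using U(1) assms by auto
  qed
  have "continuous_on {0..1} (\<lambda>s. blinfun_apply (g' (s, C)) (1,0))"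
    by (rule blinfun.continuous_on[OF c1 continuous_on_const])
  moreover have "continuous_on {0..1} (\<lambda>s. deriv (\<lambda>s. f s C) s) = continuous_on {0..1} (\<lambda>s. blinfun_apply (g' (s, C)) (1,0))"
    by (rule continuous_on_cong[OF refl e])
  ultimately show ?thesis by simp
qed

lemma gcont:
  assumes "C \<in> {0..1}"
  shows "continuous_on {0..1} (\<lambda>s. f s C)"
proof (intro continuous_at_imp_continuous_on ballI)
  fix s :: real assume "s \<in> {0..1}"
  then show "isCont (\<lambda>s. f s C) s" using gder[OF assms] by (intro DERIV_isCont) auto
qed

lemma lip: "\<exists>M. \<forall>C\<in>{0..1}. \<forall>x\<in>{0..1}. \<forall>y\<in>{0..1}. \<bar>f x C - f y C\<bar> \<le> M * \<bar>x - y\<bar>"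
proof -
  obtain U g' where U: "{0..1}\<times>{0..1} \<subseteq> U"
    "\<And>x. x\<in>U \<Longrightarrow> ((\<lambda>(s,c). f s c) has_derivative blinfun_apply (g' x)) (at x)"
    "continuous_on U g'" and "open U"
    by (rule flux_C1[OF fok]) (auto intro: that)
  let ?K = "{0..1::real}\<times>{0..1::real}"
  have "compact (g' ` ?K)"
    by (rule compact_continuous_image[OF continuous_on_subset[OF U(3) U(1)]]) (intro compact_Times compact_Icc)
  then obtain B where B: "\<forall>z\<in>?K. norm (g' z) \<le> B"
    using compact_imp_bounded[of "g' ` ?K"] unfolding bounded_iff by auto
  have main: "\<bar>f y C - f x C\<bar> \<le> B * \<bar>y - x\<bar>" if xy: "x < y" "x \<in> {0..1}" "y \<in> {0..1}" "C \<in> {0..1}" for x y C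
  proof -
    have "\<exists>z. x < z \<and> z < y \<and> f y C - f x C = (y - x) * blinfun_apply (g' (z, C)) (1,0)"
    proof (rule MVT2[OF xy(1)])
      fix s assume "x \<le> s" "s \<le> y"
      then have "(s, C) \<in> U" using U(1) xy by auto
      from dS[OF U(2)[OF this]] show "((\<lambda>s. f s C) has_real_derivative blinfun_apply (g' (s, C)) (1,0)) (at s)" .
    qed
    then obtain z where z: "x < z" "z < y" "f y C - f x C = (y - x) * blinfun_apply (g' (z, C)) (1,0)" by blast
    have "norm (blinfun_apply (g' (z, C)) (1,0)) \<le> norm (g' (z, C)) * norm (1::real, 0::real)"
      by (rule norm_blinfun)
    also have "\<dots> \<le> B" using B z xy by (auto simp: norm_Pair)
    finally have "\<bar>blinfun_apply (g' (z, C)) (1,0)\<bar> \<le> B" by simp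
    then show ?thesis using z xy by (simp add: abs_mult mult.commute mult_left_mono)
  qed
  have "\<forall>C\<in>{0..1}. \<forall>x\<in>{0..1}. \<forall>y\<in>{0..1}. \<bar>f x C - f y C\<bar> \<le> B * \<bar>x - y\<bar>"
  proof (intro ballI)
    fix C x y :: real assume h: "C \<in> {0..1}" "x \<in> {0..1}" "y \<in> {0..1}"
    consider "x < y" | "x = y" | "y < x" by linarith
    then show "\<bar>f x C - f y C\<bar> \<le> B * \<bar>x - y\<bar>"
    proof cases
      case 1 then show ?thesis using main[of x y C] h by (simp add: abs_minus_commute)
    next
      case 2 then show ?thesis by simp
    next
      case 3 then show ?thesis using main[of y x C] h by simp
    qed
  qed
  then show ?thesis by blast
qed

end



lemma ivt_between:
  fixes k :: "real \<Rightarrow> real"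
  assumes c: "continuous_on {0..1} k" and a: "a \<in> {0..1}" and b: "b \<in> {0..1}"
    and ka: "k a < 0" and kb: "k b > 0"
  shows "\<exists>z. min a b \<le> z \<and> z \<le> max a b \<and> k z = 0"
proof (cases "a < b")
  case True
  have "continuous_on {a..b} k" using c a b by (auto intro: continuous_on_subset)
  from IVT'[of k a 0 b, OF _ _ _ this] ka kb True show ?thesis by auto
next
  case False
  then have ba: "b \<le> a" by simp
  have "continuous_on {b..a} k" using c a b by (auto intro: continuous_on_subset)
  from IVT2'[of k a 0 b, OF _ _ ba this] ka kb ba show ?thesis by auto
qed

context flux begin

definition kk :: "real \<Rightarrow> real \<Rightarrow> real" where
  "kk C S = deriv (\<lambda>s. f s C) S * (S + A) - f S C"

lemma f0: "C \<in> {0..1} \<Longrightarrow> f 0 C = 0" using fok unfolding flux_ok_def by auto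
lemma f1: "C \<in> {0..1} \<Longrightarrow> f 1 C = 1" using fok unfolding flux_ok_def by auto
lemma d0: "C \<in> {0..1} \<Longrightarrow> deriv (\<lambda>s. f s C) 0 = 0" using fok unfolding flux_ok_def by auto
lemma d1: "C \<in> {0..1} \<Longrightarrow> deriv (\<lambda>s. f s C) 1 = 0" using fok unfolding flux_ok_def by auto

lemma fmono: "C \<in> {0..1} \<Longrightarrow> x \<in> {0..1} \<Longrightarrow> y \<in> {0..1} \<Longrightarrow> x < y \<Longrightarrow> f x C < f y C"
  using fok unfolding flux_ok_def strict_mono_on_def by blast

lemma fpos: "C \<in> {0..1} \<Longrightarrow> 0 < S \<Longrightarrow> S \<le> 1 \<Longrightarrow> 0 < f S C"
  using fmono[of C 0 S] f0[of C] by auto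

lemma Cmono:
  assumes "0 < S" "S < 1" "C1 \<in> {0..1}" "C2 \<in> {0..1}" "C1 < C2"
  shows "f S C1 < f S C2"
proof (rule DERIV_pos_imp_increasing[of C1 C2 "\<lambda>c. f S c", OF assms(5)])
  fix c assume c: "C1 \<le> c" "c \<le> C2"
  then have c01: "c \<in> {0..1}" using assms by auto
  have "deriv (\<lambda>c. f S c) c > 0" using fok c01 assms unfolding flux_ok_def by auto
  moreover have "((\<lambda>c. f S c) has_real_derivative deriv (\<lambda>c. f S c) c) (at c)"
    using cder[OF c01] assms by auto
  ultimately show "\<exists>y. ((\<lambda>c. f S c) has_real_derivative y) (at c) \<and> 0 < y" by blast
qed

lemma SA: "S \<ge> 0 \<Longrightarrow> S + A > 0" using A by simp

lemma inT_k: "S \<in> {0..1} \<Longrightarrow> inT f A (S, C) \<longleftrightarrow> kk C S = 0"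
  using SA[of S] unfolding inT_def lamS_def lamC_def kk_def
  by (auto simp: field_simps)

lemma inL_k: "S \<in> {0..1} \<Longrightarrow> inL f A (S, C) \<longleftrightarrow> kk C S > 0"
  using SA[of S] unfolding inL_def lamS_def lamC_def kk_def
  by (auto simp: field_simps)

lemma inR_k: "S \<in> {0..1} \<Longrightarrow> inR f A (S, C) \<longleftrightarrow> kk C S < 0"
  using SA[of S] unfolding inR_def lamS_def lamC_def kk_def
  by (auto simp: field_simps)

lemma kcont: "C \<in> {0..1} \<Longrightarrow> continuous_on {0..1} (kk C)"
  unfolding kk_def by (intro continuous_intros dcont gcont)

lemma k0: "C \<in> {0..1} \<Longrightarrow> kk C 0 = 0" unfolding kk_def using f0 d0 by simp
lemma k1: "C \<in> {0..1} \<Longrightarrow> kk C 1 = -1" unfolding kk_def using f1 d1 by simp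

lemma hder:
  assumes "C \<in> {0..1}" "S \<in> {0..1}"
  shows "((\<lambda>S. lamC f A S C) has_real_derivative kk C S / (S + A)^2) (at S)"
proof -
  have dd: "((\<lambda>S. S + A) has_real_derivative 1) (at S)"
    by (auto intro!: derivative_eq_intros)
  have "S + A \<noteq> 0" using SA[of S] assms by auto
  from DERIV_quotient[OF gder[OF assms] dd this]
  have "((\<lambda>S. f S C / (S + A)) has_real_derivative
      (deriv (\<lambda>s. f s C) S * (S + A) - 1 * f S C) / (S + A)^Suc (Suc 0)) (at S)" .
  then show ?thesis unfolding lamC_def kk_def by (simp add: power2_eq_square)
qed

lemma hcont: "C \<in> {0..1} \<Longrightarrow> continuous_on {0..1} (\<lambda>S. lamC f A S C)"
  unfolding lamC_def using A by (intro continuous_intros gcont) force+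

lemma star:
  assumes "C \<in> {0..1}"
  shows "0 < Sstar f A C" "Sstar f A C < 1" "inT f A (Sstar f A C, C)"
    "\<And>S. 0 < S \<Longrightarrow> S < 1 \<Longrightarrow> inT f A (S, C) \<Longrightarrow> S = Sstar f A C"
proof -
  have ex: "\<exists>!S. 0 < S \<and> S < 1 \<and> inT f A (S, C)" using tok assms unfolding transition_ok_def by blast
  have p: "0 < Sstar f A C \<and> Sstar f A C < 1 \<and> inT f A (Sstar f A C, C)"
    unfolding Sstar_def by (rule theI'[OF ex])
  then show "0 < Sstar f A C" "Sstar f A C < 1" "inT f A (Sstar f A C, C)" by auto
  show "\<And>S. 0 < S \<Longrightarrow> S < 1 \<Longrightarrow> inT f A (S, C) \<Longrightarrow> S = Sstar f A C"
    using ex p by blast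
qed

lemma kneg:
  assumes C: "C \<in> {0..1}" and S: "Sstar f A C < S" "S \<le> 1"
  shows "kk C S < 0"
proof (rule ccontr)
  assume "\<not> kk C S < 0"
  then have ge: "kk C S \<ge> 0" by simp
  have k1': "kk C 1 = -1" by (rule k1[OF C])
  have S1: "S < 1" using S k1' ge by (cases "S = 1") auto
  have s0: "0 < Sstar f A C" by (rule star(1)[OF C])
  have S0: "0 < S" using S s0 by simp
  have "kk C S \<noteq> 0"
  proof
    assume "kk C S = 0"
    then have "inT f A (S, C)" using inT_k[of S C] S0 S1 by simp
    then have "S = Sstar f A C" using star(4)[OF C S0 S1] by simp
    then show False using S by simp
  qed
  with ge have gt: "kk C S > 0" by simp
  have "\<exists>z. min 1 S \<le> z \<and> z \<le> max 1 S \<and> kk C z = 0"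
    by (rule ivt_between[OF kcont[OF C]]) (use k1' gt S0 S1 in simp_all)
  then obtain z where z: "S \<le> z" "z \<le> 1" "kk C z = 0" using S1 by auto
  have z1: "z \<noteq> 1" using z k1' by auto
  have "inT f A (z, C)" using inT_k[of z C] z S0 by simp
  then have "z = Sstar f A C" using star(4)[OF C, of z] z z1 S0 by simp
  then show False using z S by simp
qed

lemma kpos:
  assumes C: "C \<in> {0..1}" and S: "0 < S" "S < Sstar f A C"
  shows "kk C S > 0"
proof (rule ccontr)
  let ?s = "Sstar f A C"
  have s1: "?s < 1" "0 < ?s" using star(1,2)[OF C] by auto
  have notz: "kk C x \<noteq> 0" if "0 < x" "x < ?s" for x
  proof
    assume "kk C x = 0"
    then have "inT f A (x, C)" using inT_k[of x C] that s1 by simp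
    then have "x = ?s" using star(4)[OF C, of x] that s1 by simp
    then show False using that by simp
  qed
  assume "\<not> kk C S > 0"
  then have neg: "kk C S < 0" using notz[OF S] by linarith
  have allneg: "kk C x < 0" if x: "0 < x" "x < ?s" for x
  proof (rule ccontr)
    assume "\<not> kk C x < 0"
    then have "kk C x > 0" using notz[OF x] by linarith
    have "\<exists>z. min S x \<le> z \<and> z \<le> max S x \<and> kk C z = 0"
      by (rule ivt_between[OF kcont[OF C]]) (use neg \<open>kk C x > 0\<close> S x s1 in simp_all)
    then obtain z where z: "min S x \<le> z" "z \<le> max S x" "kk C z = 0" by blast
    have "0 < z" "z < ?s" using z S x by auto
    then show False using notz z(3) by blast
  qed
  have "lamC f A ?s C < lamC f A 0 C"
  proof (rule DERIV_neg_imp_decreasing_open[OF s1(2)])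
    fix x assume x: "0 < x" "x < ?s"
    have "kk C x / (x + A)^2 < 0" using allneg[OF x] SA[of x] x by (simp add: divide_neg_pos)
    moreover have "((\<lambda>S. lamC f A S C) has_real_derivative kk C x / (x + A)^2) (at x)"
      using hder[OF C, of x] x s1 by simp
    ultimately show "\<exists>y. ((\<lambda>S. lamC f A S C) has_real_derivative y) (at x) \<and> y < 0" by blast
  next
    show "continuous_on {0..?s} (\<lambda>S. lamC f A S C)"
      by (rule continuous_on_subset[OF hcont[OF C]]) (use s1 in auto)
  qed
  moreover have "lamC f A 0 C = 0" unfolding lamC_def using f0[OF C] by simp
  moreover have "lamC f A ?s C > 0" unfolding lamC_def using fpos[OF C, of ?s] s1 SA[of ?s] by simp
  ultimately show False by simp
qed

lemma hinc:
  assumes C: "C \<in> {0..1}" and xy: "0 \<le> x" "x < y" "y \<le> Sstar f A C"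
  shows "lamC f A x C < lamC f A y C"
proof (rule DERIV_pos_imp_increasing_open[OF xy(2)])
  have s1: "Sstar f A C < 1" using star(2)[OF C] by auto
  fix z assume z: "x < z" "z < y"
  have "kk C z > 0" using kpos[OF C, of z] z xy by linarith
  moreover have "(z + A)^2 > 0" using SA[of z] z xy by simp
  ultimately have "kk C z / (z + A)^2 > 0" by (rule divide_pos_pos)
  moreover have "((\<lambda>S. lamC f A S C) has_real_derivative kk C z / (z + A)^2) (at z)"
    using hder[OF C, of z] z xy s1 by simp
  ultimately show "\<exists>d. ((\<lambda>S. lamC f A S C) has_real_derivative d) (at z) \<and> d > 0" by blast
next
  have s1: "Sstar f A C < 1" using star(2)[OF C] by auto
  show "continuous_on {x..y} (\<lambda>S. lamC f A S C)"
    by (rule continuous_on_subset[OF hcont[OF C]]) (use xy s1 in auto)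
qed

lemma hdec:
  assumes C: "C \<in> {0..1}" and xy: "Sstar f A C \<le> x" "x < y" "y \<le> 1"
  shows "lamC f A y C < lamC f A x C"
proof (rule DERIV_neg_imp_decreasing_open[OF xy(2)])
  have s1: "0 < Sstar f A C" using star(1)[OF C] by auto
  fix z assume z: "x < z" "z < y"
  have "kk C z < 0" using kneg[OF C, of z] z xy by linarith
  moreover have "(z + A)^2 > 0" using SA[of z] z xy s1 by simp
  ultimately have "kk C z / (z + A)^2 < 0" by (rule divide_neg_pos)
  moreover have "((\<lambda>S. lamC f A S C) has_real_derivative kk C z / (z + A)^2) (at z)"
    using hder[OF C, of z] z xy s1 by simp
  ultimately show "\<exists>d. ((\<lambda>S. lamC f A S C) has_real_derivative d) (at z) \<and> d < 0" by blast
next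
  have s1: "0 < Sstar f A C" using star(1)[OF C] by auto
  show "continuous_on {x..y} (\<lambda>S. lamC f A S C)"
    by (rule continuous_on_subset[OF hcont[OF C]]) (use xy s1 in auto)
qed

lemma inT_iff:
  assumes C: "C \<in> {0..1}" and S: "S \<in> {0..1}"
  shows "inT f A (S, C) \<longleftrightarrow> S = 0 \<or> S = Sstar f A C"
proof -
  have "kk C S = 0 \<longleftrightarrow> S = 0 \<or> S = Sstar f A C"
    using kpos[OF C, of S] kneg[OF C, of S] k0[OF C] star(3)[OF C] inT_k[of "Sstar f A C" C] star(1,2)[OF C] S
    by (cases "S < Sstar f A C"; cases "S = Sstar f A C"; cases "S = 0"; auto)
  then show ?thesis using inT_k[OF S] by simp
qed

lemma inL_iff:
  assumes C: "C \<in> {0..1}" and S: "S \<in> {0..1}"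
  shows "inL f A (S, C) \<longleftrightarrow> 0 < S \<and> S < Sstar f A C"
proof -
  have "kk C S > 0 \<longleftrightarrow> 0 < S \<and> S < Sstar f A C"
    using kpos[OF C, of S] kneg[OF C, of S] k0[OF C] star(3)[OF C] inT_k[of "Sstar f A C" C] star(1,2)[OF C] S
    by (cases "S < Sstar f A C"; cases "S = Sstar f A C"; cases "S = 0"; auto)
  then show ?thesis using inL_k[OF S] by simp
qed

lemma inR_iff:
  assumes C: "C \<in> {0..1}" and S: "S \<in> {0..1}"
  shows "inR f A (S, C) \<longleftrightarrow> Sstar f A C < S"
proof -
  have "kk C S < 0 \<longleftrightarrow> Sstar f A C < S"
    using kpos[OF C, of S] kneg[OF C, of S] k0[OF C] star(3)[OF C] inT_k[of "Sstar f A C" C] star(1,2)[OF C] S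
    by (cases "S < Sstar f A C"; cases "S = Sstar f A C"; cases "S = 0"; auto)
  then show ?thesis using inR_k[OF S] by simp
qed

end



context flux begin

lemma lipC:
  assumes "C \<in> {0..1}" "0 \<le> a" "a < b" "b \<le> 1"
  shows "\<exists>M. lipw (\<lambda>s. f s C) a b M"
proof -
  obtain M where M: "\<forall>C\<in>{0..1}. \<forall>x\<in>{0..1}. \<forall>y\<in>{0..1}. \<bar>f x C - f y C\<bar> \<le> M * \<bar>x - y\<bar>"
    using lip by blast
  have "lipw (\<lambda>s. f s C) a b M"
    by unfold_locales (use assms M in auto)
  then show ?thesis by blast
qed

lemma le_lam: "0 \<le> y \<Longrightarrow> f y C \<le> c * (y + A) \<longleftrightarrow> lamC f A y C \<le> c"
  unfolding lamC_def using SA[of y] by (simp add: pos_divide_le_eq)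

lemma ge_lam: "0 \<le> y \<Longrightarrow> c * (y + A) \<le> f y C \<longleftrightarrow> c \<le> lamC f A y C"
  unfolding lamC_def using SA[of y] by (simp add: pos_le_divide_eq)

lemma lt_lam: "0 \<le> y \<Longrightarrow> f y C < c * (y + A) \<longleftrightarrow> lamC f A y C < c"
  unfolding lamC_def using SA[of y] by (simp add: pos_divide_less_eq)

lemma gt_lam: "0 \<le> y \<Longrightarrow> c * (y + A) < f y C \<longleftrightarrow> c < lamC f A y C"
  unfolding lamC_def using SA[of y] by (simp add: pos_less_divide_eq)

lemma f_lam: "0 \<le> y \<Longrightarrow> f y C = lamC f A y C * (y + A)"
  unfolding lamC_def using SA[of y] by simp

lemma hmax:
  assumes C: "C \<in> {0..1}" and S: "S \<in> {0..1}"
  shows "lamC f A S C \<le> lamC f A (Sstar f A C) C"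
  using hinc[OF C, of S "Sstar f A C"] hdec[OF C, of "Sstar f A C" S] S
  by (cases "S < Sstar f A C"; cases "S = Sstar f A C") auto

lemma lam0: "C \<in> {0..1} \<Longrightarrow> S \<in> {0..1} \<Longrightarrow> lamC f A S C = 0 \<longleftrightarrow> S = 0"
  unfolding lamC_def using SA[of S] fpos[of C S] f0[of C] by (cases "S = 0") auto

lemma lampos: "C \<in> {0..1} \<Longrightarrow> 0 < S \<Longrightarrow> S \<le> 1 \<Longrightarrow> lamC f A S C > 0"
  unfolding lamC_def using SA[of S] fpos[of C S] by simp

lemma Sk_val:
  assumes C: "C \<in> {0..1}" and S2: "0 < S2" "S2 < Sstar f A C"
    and S': "S' \<in> {0..1}" "S' \<noteq> S2" "lamC f A S' C = lamC f A S2 C"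
  shows "Sk f A (S2, C) = ereal S'" and "Sstar f A C < S'"
proof -
  let ?s = "Sstar f A C"
  have gt: "?s < S''" if t: "S'' \<in> {0..1}" "S'' \<noteq> S2" "lamC f A S'' C = lamC f A S2 C" for S''
  proof (rule ccontr)
    assume "\<not> ?s < S''"
    then have le: "S'' \<le> ?s" by simp
    consider "S'' < S2" | "S2 < S''" using t(2) linorder_neqE by blast
    then show False
    proof cases
      case 1
      have "lamC f A S'' C < lamC f A S2 C" by (rule hinc[OF C]) (use 1 t(1) S2 in simp_all)
      then show ?thesis using t(3) by simp
    next
      case 2
      have "lamC f A S2 C < lamC f A S'' C" by (rule hinc[OF C]) (use 2 le S2 in simp_all)
      then show ?thesis using t(3) by simp
    qed
  qed
  show sS': "?s < S'" by (rule gt[OF S'])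
  have uniq: "S'' = S'" if t: "S'' \<in> {0..1} \<and> S'' \<noteq> S2 \<and> lamC f A S'' C = lamC f A S2 C" for S''
  proof (rule ccontr)
    assume ne: "S'' \<noteq> S'"
    have s'': "?s < S''" using gt t by blast
    consider "S'' < S'" | "S' < S''" using ne linorder_neqE by blast
    then show False
    proof cases
      case 1
      have "lamC f A S' C < lamC f A S'' C" by (rule hdec[OF C]) (use 1 s'' S'(1) in simp_all)
      then show ?thesis using t S'(3) by simp
    next
      case 2
      have "lamC f A S'' C < lamC f A S' C" by (rule hdec[OF C]) (use 2 sS' t in simp_all)
      then show ?thesis using t S'(3) by simp
    qed
  qed
  have the: "(THE S''. S'' \<in> {0..1} \<and> S'' \<noteq> S2 \<and> lamC f A S'' C = lamC f A S2 C) = S'"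
    by (rule the_equality) (use S' uniq in blast)+
  have ex: "\<exists>S''\<in>{0..1}. S'' \<noteq> S2 \<and> lamC f A S'' C = lamC f A S2 C" using S' by blast
  have ne: "S2 \<noteq> ?s" using S2 by simp
  have "Sk f A (S2, C) = (if S2 = ?s then ereal ?s
      else if (\<exists>S''\<in>{0..1}. S'' \<noteq> S2 \<and> lamC f A S'' C = lamC f A S2 C)
      then ereal (THE S''. S'' \<in> {0..1} \<and> S'' \<noteq> S2 \<and> lamC f A S'' C = lamC f A S2 C)
      else \<infinity>)"
    unfolding Sk_def Let_def fst_conv snd_conv by (rule refl)
  also have "\<dots> = ereal S'" using ne ex the by presburger
  finally show "Sk f A (S2, C) = ereal S'" .
qed


lemma main:
  assumes SL: "SL \<in> {0..1}" and S1: "S1 \<in> {0..1}" and S2: "S2 \<in> {0..1}" and SR: "SR \<in> {0..1}"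
    and CL: "CL \<in> {0..1}" and CR: "CR \<in> {0..1}" and CLR: "CL < CR"
    and SL1: "SL \<noteq> S1" and S2R: "S2 \<noteq> SR"
    and adm: "adm_Cwave f A (S1, CL) (S2, CR)"
  shows "compatible_SCS f A (SL, CL) (S1, CL) (S2, CR) (SR, CR) \<longleftrightarrow>
           inR f A (SL, CL) \<and> inT f A (S1, CL) \<and> inL f A (S2, CR) \<and>
           0 \<le> SR \<and> ereal SR \<le> Sk f A (S2, CR)"
proof -
  define sL where "sL = Sstar f A CL"
  define sR where "sR = Sstar f A CR"
  define lam where "lam = lamC f A S1 CL"
  define vf1 where "vf1 = Swave_vf (\<lambda>s. f s CL) SL S1"
  define vi2 where "vi2 = Swave_vi (\<lambda>s. f s CR) S2 SR"
  have lam2: "lamC f A S2 CR = lam" using adm unfolding adm_Cwave_def lam_def by simp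
  have adm': "(inL f A (S1, CL) \<or> inT f A (S1, CL)) \<and> (inL f A (S2, CR) \<or> inT f A (S2, CR)) \<or>
      (inR f A (S1, CL) \<or> inT f A (S1, CL)) \<and> (inR f A (S2, CR) \<or> inT f A (S2, CR))"
    using adm unfolding adm_Cwave_def by simp
  have sL: "0 < sL" "sL < 1" unfolding sL_def using star(1,2)[OF CL] by auto
  have sR: "0 < sR" "sR < 1" unfolding sR_def using star(1,2)[OF CR] by auto
  have gap: "lam < lamC f A sR CR"
  proof -
    have "lam \<le> lamC f A sL CL" unfolding lam_def sL_def by (rule hmax[OF CL S1])
    also have "\<dots> < lamC f A sL CR"
      unfolding lamC_def using Cmono[OF sL CL CR CLR] SA[of sL] sL by (simp add: divide_strict_right_mono)
    also have "\<dots> \<le> lamC f A sR CR" unfolding sR_def by (rule hmax[OF CR]) (use sL in simp)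
    finally show ?thesis .
  qed
  have S2nsR: "S2 \<noteq> sR" using gap lam2 by auto
  have comp_iff: "compatible_SCS f A (SL, CL) (S1, CL) (S2, CR) (SR, CR) \<longleftrightarrow> vf1 \<le> lam \<and> lam \<le> vi2"
    unfolding compatible_SCS_def vf1_def vi2_def lam_def by simp
  have f1: "f S1 CL = lam * (S1 + A)" unfolding lam_def using f_lam S1 by simp
  have f2: "f S2 CR = lam * (S2 + A)" using f_lam[of S2 CR] lam2 S2 by simp
  show ?thesis unfolding comp_iff
  proof
    assume comp: "vf1 \<le> lam \<and> lam \<le> vi2"
    have vfS: "lamS f S1 CL \<le> vf1"
    proof (cases "SL < S1")
      case True
      obtain M where l: "lipw (\<lambda>s. f s CL) SL S1 M" using lipC[OF CL, of SL S1] True SL S1 by auto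
      show ?thesis using lipw.vf_inc_ge[OF l gder[OF CL S1]] unfolding vf1_def lamS_def by simp
    next
      case False
      then have "S1 < SL" using SL1 by simp
      then obtain M where l: "lipw (\<lambda>s. f s CL) S1 SL M" using lipC[OF CL, of S1 SL] SL S1 by auto
      show ?thesis using lipw.vf_dec_ge[OF l gder[OF CL S1]] unfolding vf1_def lamS_def by simp
    qed
    have viS: "vi2 \<le> lamS f S2 CR"
    proof (cases "S2 < SR")
      case True
      obtain M where l: "lipw (\<lambda>s. f s CR) S2 SR M" using lipC[OF CR, of S2 SR] True S2 SR by auto
      show ?thesis using lipw.vi_inc_le[OF l gder[OF CR S2]] unfolding vi2_def lamS_def by simp
    next
      case False
      then have "SR < S2" using S2R by simp
      then obtain M where l: "lipw (\<lambda>s. f s CR) SR S2 M" using lipC[OF CR, of SR S2] SR S2 by auto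
      show ?thesis using lipw.vi_dec_le[OF l gder[OF CR S2]] unfolding vi2_def lamS_def by simp
    qed
    have nL1: "\<not> inL f A (S1, CL)" using vfS comp unfolding inL_def lam_def by simp
    have nR2: "\<not> inR f A (S2, CR)" using viS comp lam2 unfolding inR_def by simp
    have S1ne0: "S1 \<noteq> 0"
    proof
      assume S10: "S1 = 0"
      then have SLp: "0 < SL" using SL SL1 by auto
      obtain M where l: "lipw (\<lambda>s. f s CL) 0 SL M" using lipC[OF CL, of 0 SL] SLp SL by auto
      have "(f SL CL - f 0 CL) / (SL - 0) \<le> vf1"
        using lipw.vf_dec_ge[OF l gder[OF CL, of 0]] unfolding vf1_def S10 by simp
      moreover have "(f SL CL - f 0 CL) / (SL - 0) > 0" using f0[OF CL] fpos[OF CL SLp] SL SLp by simp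
      moreover have "lam = 0" unfolding lam_def S10 using lam0[OF CL, of 0] by simp
      ultimately show False using comp by simp
    qed
    have S2ne0: "S2 \<noteq> 0"
    proof
      assume "S2 = 0"
      then have "lam = 0" using lam2 lam0[OF CR, of 0] by simp
      then have "S1 = 0" using lam0[OF CL S1] unfolding lam_def by simp
      with S1ne0 show False by simp
    qed
    have nT2: "\<not> inT f A (S2, CR)" using inT_iff[OF CR S2] S2ne0 S2nsR unfolding sR_def by simp
    have T1: "inT f A (S1, CL)" using adm' nL1 nR2 nT2 by blast
    have S1sL: "S1 = sL" using inT_iff[OF CL S1] T1 S1ne0 unfolding sL_def by simp
    have L2: "inL f A (S2, CR)"
    proof -
      have "\<not> sR < S2" using nR2 inR_iff[OF CR S2] unfolding sR_def by simp
      then have "0 < S2 \<and> S2 < sR" using S2ne0 S2nsR S2 by auto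
      then show ?thesis using inL_iff[OF CR S2] unfolding sR_def by simp
    qed
    have R1: "inR f A (SL, CL)"
    proof -
      have "sL < SL"
      proof (rule ccontr)
        assume "\<not> sL < SL"
        then have lt: "SL < S1" using S1sL SL1 by simp
        obtain M where l: "lipw (\<lambda>s. f s CL) SL S1 M" using lipC[OF CL, of SL S1] lt SL S1 by auto
        have ch: "(f S1 CL - f SL CL) / (S1 - SL) \<le> vf1"
          using lipw.vf_inc_ge[OF l gder[OF CL S1]] unfolding vf1_def by simp
        have "lamC f A SL CL < lamC f A S1 CL" by (rule hinc[OF CL]) (use SL lt S1sL in \<open>simp_all add: sL_def\<close>)
        then have "f SL CL < lam * (SL + A)" using lt_lam[of SL CL lam] SL unfolding lam_def by simp
        then have "lam * (S1 - SL) < f S1 CL - f SL CL" using f1 by (simp add: algebra_simps)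
        then have "lam < (f S1 CL - f SL CL) / (S1 - SL)" using lt by (simp add: pos_less_divide_eq)
        with ch comp show False by simp
      qed
      then show ?thesis using inR_iff[OF CL SL] unfolding sL_def by simp
    qed
    have Skp: "ereal SR \<le> Sk f A (S2, CR)"
    proof (cases "\<exists>S'\<in>{0..1}. S' \<noteq> S2 \<and> lamC f A S' CR = lamC f A S2 CR")
      case True
      then obtain S' where S': "S' \<in> {0..1}" "S' \<noteq> S2" "lamC f A S' CR = lamC f A S2 CR" by blast
      have S2r: "0 < S2" "S2 < Sstar f A CR" using L2 inL_iff[OF CR S2] by auto
      note skv = Sk_val[OF CR S2r S']
      have "SR \<le> S'"
      proof (rule ccontr)
        assume "\<not> SR \<le> S'"
        then have lt: "S' < SR" by simp
        have S2SR: "S2 < SR" using S2r skv(2) lt by simp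
        obtain M where l: "lipw (\<lambda>s. f s CR) S2 SR M" using lipC[OF CR, of S2 SR] S2SR S2 SR by auto
        have ch: "vi2 \<le> (f SR CR - f S2 CR) / (SR - S2)"
          using lipw.vi_inc_le[OF l gder[OF CR S2]] unfolding vi2_def by simp
        have "lamC f A SR CR < lamC f A S' CR" by (rule hdec[OF CR]) (use skv(2) lt SR in simp_all)
        then have "lamC f A SR CR < lam" using S' lam2 by simp
        then have "f SR CR < lam * (SR + A)" using lt_lam[of SR CR lam] SR by simp
        then have "f SR CR - f S2 CR < lam * (SR - S2)" using f2 by (simp add: algebra_simps)
        then have "(f SR CR - f S2 CR) / (SR - S2) < lam" using S2SR by (simp add: pos_divide_less_eq)
        with ch comp show False by simp
      qed
      then show ?thesis using skv(1) by simp
    next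
      case False
      have "Sk f A (S2, CR) = (if S2 = Sstar f A CR then ereal (Sstar f A CR)
          else if (\<exists>S'\<in>{0..1}. S' \<noteq> S2 \<and> lamC f A S' CR = lamC f A S2 CR)
          then ereal (THE S'. S' \<in> {0..1} \<and> S' \<noteq> S2 \<and> lamC f A S' CR = lamC f A S2 CR)
          else \<infinity>)"
        unfolding Sk_def Let_def fst_conv snd_conv by (rule refl)
      also have "\<dots> = \<infinity>" using False S2nsR unfolding sR_def by simp
      finally show ?thesis by simp
    qed
    show "inR f A (SL, CL) \<and> inT f A (S1, CL) \<and> inL f A (S2, CR) \<and> 0 \<le> SR \<and> ereal SR \<le> Sk f A (S2, CR)"
      using R1 T1 L2 SR Skp by simp
  next
    assume rhs: "inR f A (SL, CL) \<and> inT f A (S1, CL) \<and> inL f A (S2, CR) \<and> 0 \<le> SR \<and> ereal SR \<le> Sk f A (S2, CR)"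
    have S2r: "0 < S2" "S2 < sR" using rhs inL_iff[OF CR S2] unfolding sR_def by auto
    have lampos': "0 < lam" using lampos[OF CR S2r(1)] S2 lam2 by simp
    have S1ne0: "S1 \<noteq> 0" using lam0[OF CL S1] lampos' unfolding lam_def by auto
    have S1sL: "S1 = sL" using rhs inT_iff[OF CL S1] S1ne0 unfolding sL_def by auto
    have SLgt: "sL < SL" using rhs inR_iff[OF CL SL] unfolding sL_def by auto
    have vf: "vf1 \<le> lam"
    proof -
      obtain M where l: "lipw (\<lambda>s. f s CL) S1 SL M" using lipC[OF CL, of S1 SL] SLgt S1sL SL S1 by auto
      have "\<forall>y\<in>{S1..SL}. f y CL \<le> f S1 CL + lam * (y - S1)"
      proof
        fix y assume y: "y \<in> {S1..SL}"
        have "lamC f A y CL \<le> lam"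
        proof (cases "y = sL")
          case True then show ?thesis using S1sL unfolding lam_def by simp
        next
          case False
          then have "lamC f A y CL < lamC f A sL CL"
            by (intro hdec[OF CL]) (use y S1sL SL in \<open>auto simp: sL_def\<close>)
          then show ?thesis using S1sL unfolding lam_def by simp
        qed
        then have "f y CL \<le> lam * (y + A)" using le_lam[of y CL lam] y S1 by simp
        then show "f y CL \<le> f S1 CL + lam * (y - S1)" using f1 by (simp add: algebra_simps)
      qed
      from lipw.vf_dec_le[OF l this] show ?thesis unfolding vf1_def .
    qed
    have vi: "lam \<le> vi2"
    proof (cases "S2 < SR")
      case True
      obtain M where l: "lipw (\<lambda>s. f s CR) S2 SR M" using lipC[OF CR, of S2 SR] True S2 SR by auto
      have hSR: "lam \<le> lamC f A SR CR"
      proof (cases "SR \<le> sR")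
        case True
        have "lamC f A S2 CR < lamC f A SR CR"
          by (rule hinc[OF CR]) (use S2r \<open>S2 < SR\<close> True in \<open>simp_all add: sR_def\<close>)
        then show ?thesis using lam2 by simp
      next
        case False
        show ?thesis
        proof (rule ccontr)
          assume "\<not> lam \<le> lamC f A SR CR"
          then have lt: "lamC f A SR CR < lam" by simp
          have "lamC f A S2 CR < lamC f A sR CR"
            by (rule hinc[OF CR]) (use S2r in \<open>simp_all add: sR_def\<close>)
          then have gt: "lam < lamC f A sR CR" using lam2 by simp
          have "continuous_on {sR..SR} (\<lambda>S. lamC f A S CR)"
            by (rule continuous_on_subset[OF hcont[OF CR]]) (use sR SR in auto)
          from IVT2'[of "\<lambda>S. lamC f A S CR" SR lam sR, OF _ _ _ this] lt gt False
          obtain S' where S': "sR \<le> S'" "S' \<le> SR" "lamC f A S' CR = lam" by auto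
          have S'p: "S' \<in> {0..1}" "S' \<noteq> S2" "lamC f A S' CR = lamC f A S2 CR"
            using S' sR SR S2r lam2 by auto
          have S2r': "0 < S2" "S2 < Sstar f A CR" using S2r unfolding sR_def by auto
          have "Sk f A (S2, CR) = ereal S'" by (rule Sk_val(1)[OF CR S2r' S'p])
          then have "SR \<le> S'" using rhs by simp
          then have "S' = SR" using S' by simp
          then show False using S' lt by simp
        qed
      qed
      have "\<forall>y\<in>{S2..SR}. f S2 CR + lam * (y - S2) \<le> f y CR"
      proof
        fix y assume y: "y \<in> {S2..SR}"
        have "lam \<le> lamC f A y CR"
        proof (cases "y \<le> sR")
          case True
          show ?thesis
          proof (cases "y = S2")
            case True then show ?thesis using lam2 by simp
          next
            case False
            have "lamC f A S2 CR < lamC f A y CR"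
              by (rule hinc[OF CR]) (use S2r y False \<open>y \<le> sR\<close> in \<open>auto simp: sR_def\<close>)
            then show ?thesis using lam2 by simp
          qed
        next
          case False
          show ?thesis
          proof (cases "y = SR")
            case True then show ?thesis using hSR by simp
          next
            case ne: False
            have "lamC f A SR CR < lamC f A y CR"
              by (rule hdec[OF CR]) (use y ne False SR in \<open>auto simp: sR_def\<close>)
            then show ?thesis using hSR by simp
          qed
        qed
        then have "lam * (y + A) \<le> f y CR" using ge_lam[of y lam CR] y S2 by simp
        then show "f S2 CR + lam * (y - S2) \<le> f y CR" using f2 by (simp add: algebra_simps)
      qed
      from lipw.vi_inc_ge[OF l this] show ?thesis unfolding vi2_def .
    next
      case False
      then have lt: "SR < S2" using S2R by simp
      obtain M where l: "lipw (\<lambda>s. f s CR) SR S2 M" using lipC[OF CR, of SR S2] lt S2 SR by auto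
      have "\<forall>y\<in>{SR..S2}. f y CR \<le> f S2 CR + lam * (y - S2)"
      proof
        fix y assume y: "y \<in> {SR..S2}"
        have "lamC f A y CR \<le> lam"
        proof (cases "y = S2")
          case True then show ?thesis using lam2 by simp
        next
          case False
          have "lamC f A y CR < lamC f A S2 CR"
            by (rule hinc[OF CR]) (use y False S2r SR in \<open>auto simp: sR_def\<close>)
          then show ?thesis using lam2 by simp
        qed
        then have "f y CR \<le> lam * (y + A)" using le_lam[of y CR lam] y SR by simp
        then show "f y CR \<le> f S2 CR + lam * (y - S2)" using f2 by (simp add: algebra_simps)
      qed
      from lipw.vi_dec_ge[OF l this] show ?thesis unfolding vi2_def .
    qed
    show "vf1 \<le> lam \<and> lam \<le> vi2" using vf vi by simp
  qed
qed

end

theorem lemma3p3: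
  fixes f :: "real \<Rightarrow> real \<Rightarrow> real" and A SL CL S1 S2 SR CR :: real
  assumes "A > 0" and "flux_ok f" and "transition_ok f A"
    and "SL \<in> {0..1}" "S1 \<in> {0..1}" "S2 \<in> {0..1}" "SR \<in> {0..1}"
    and "CL \<in> {0..1}" "CR \<in> {0..1}"
    and "CL < CR"
    and "(SL, CL) \<noteq> (SR, CR)"
    and "SL \<noteq> S1" and "S2 \<noteq> SR"
    and "adm_Cwave f A (S1, CL) (S2, CR)"
  shows "compatible_SCS f A (SL, CL) (S1, CL) (S2, CR) (SR, CR) \<longleftrightarrow>
           inR f A (SL, CL) \<and> inT f A (S1, CL) \<and> inL f A (S2, CR) \<and>
           0 \<le> SR \<and> ereal SR \<le> Sk f A (S2, CR)"
  proof -
  interpret flux f A by unfold_locales (use assms in auto)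
  show ?thesis by (rule main) (use assms in auto)
qed

end
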